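(* Let $f(x)=x^5+px^4+qx^3+rx^2+sx+t$ with real coefficients, and suppose $D=0$, $L_1=0$, $L_2\neq0$ and $D_2>0$ (so $f$ has two distinct real double roots and one real simple root). Then the simple root of $f$ is $C_3/L_2$, the two double roots are the roots of $L_2x^2-2C_{2,1}x+C_{2,0}$, and with $F_4=\dfrac{C_3^2}{L_2^2}+\dfrac{C_{2,0}}{L_2}-\dfrac{2C_3C_{2,1}}{L_2^2}$, $F_5=\dfrac{2C_3-2C_{2,1}}{L_2}$: (a) if $F_4>0$ and $F_5<0$: single $<$ double $<$ double; (b) if $F_4<0$: double $<$ single $<$ double; (c) if $F_4>0$ and $F_5>0$: double $<$ double $<$ single.
   Context: Let $\alpha_1,\dots,\alpha_5\in\mathbb{C}$ be the roots of $f$ listed with multiplicity. $D=\prod_{1\le i<j\le 5}(\alpha_i-\alpha_j)^2$ is the discriminant of $f$. $L_2=40qs-16p^2s-8rp^3+38rpq+3p^2q^2-12q^3-45r^2$. $L_1=-264ps^2r-12p^3tq^2+36r^3pq-124srpq^2+28srp^3q+260sptq-132p^2qrt+240pr^2t+234sqr^2+32p^4tr+48ptq^3-56sp^3t-80q^2rt+194qs^2p^2-600str-6q^3sp^2+2p^2q^2r^2-12sr^2p^2-54r^4+320s^3-8q^3r^2-8r^3p^3+250qt^2-176q^2s^2+24q^4s-36p^4s^2-100p^2t^2$. $D_2=24p^2q^4s-1100q^3rt+800p^3qst-1735p^2q^2rt-3p^2qr^2s+20pq^3rs-600p^2rst-1150pq^2st+5475pqr^2t-1380pqrs^2+1500qrst+6p^3qr^3+p^4q^2r^2-128p^6rt+660pq^4t-136p^5st-3p^4q^3s-236p^4qs^2+337p^2q^2s^2+48p^5q^2t-357p^3q^3t-12p^4r^2s-45pr^3s+60q^2r^2s-8p^2q^3r^2-500p^2qt^2-24pq^2r^3-1380p^3r^2t+408p^3rs^2-4p^5qrs+1028p^4qrt+11p^3q^2rs+36p^6s^2+100p^4t^2+9p^2r^4-48q^5s+16q^4r^2+160q^3s^2+625q^2t^2-3375r^3t+900r^2s^2$.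 $C_{2,1}=6sp^3+4q^2r-3pr^2-21spq+30sr+10p^2t-25tq-p^2rq$. $C_{2,0}=-16tp^3-75tr+3psr-4q^2s+55tpq+p^2sq$. $C_3=-34p^2rq+8rp^4+44spq-3p^3q^2-8sp^3+12pq^3+57pr^2-16q^2r+100tq-120sr-40p^2t$. *)

theory Defs
  imports "HOL-Computational_Algebra.Polynomial"
begin

definition quintic :: "real \<Rightarrow> real \<Rightarrow> real \<Rightarrow> real \<Rightarrow> real \<Rightarrow> real poly" where
  "quintic p q r s t = [:t, s, r, q, p, 1:]"

text \<open>Discriminant, defined via the complex roots listed with multiplicity:
  D = prod_{i<j} (alpha_i - alpha_j)^2, where f = prod_i (x - alpha_i) over C.
  (The value does not depend on the ordering of the roots.)\<close>
definition disc5 :: "real \<Rightarrow> real \<Rightarrow> real \<Rightarrow> real \<Rightarrow> real \<Rightarrow> complex" where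
  "disc5 p q r s t = (THE d. \<exists>al :: complex list. length al = 5 \<and>
      map_poly complex_of_real (quintic p q r s t) = (\<Prod>i<5. [:- al ! i, 1:]) \<and>
      d = (\<Prod>j<5. \<Prod>i<j. (al ! i - al ! j)^2))"

definition L2 :: "real \<Rightarrow> real \<Rightarrow> real \<Rightarrow> real \<Rightarrow> real \<Rightarrow> real" where
  "L2 p q r s t = 40*q*s-16*p^2*s-8*r*p^3+38*r*p*q+3*p^2*q^2-12*q^3-45*r^2"

definition L1 :: "real \<Rightarrow> real \<Rightarrow> real \<Rightarrow> real \<Rightarrow> real \<Rightarrow> real" where
  "L1 p q r s t = -264*p*s^2*r-12*p^3*t*q^2+36*r^3*p*q-124*s*r*p*q^2+28*s*r*p^3*q+260*s*p*t*q
    -132*p^2*q*r*t+240*p*r^2*t+234*s*q*r^2+32*p^4*t*r+48*p*t*q^3-56*s*p^3*t-80*q^2*r*t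
    +194*q*s^2*p^2-600*s*t*r-6*q^3*s*p^2+2*p^2*q^2*r^2-12*s*r^2*p^2-54*r^4+320*s^3
    -8*q^3*r^2-8*r^3*p^3+250*q*t^2-176*q^2*s^2+24*q^4*s-36*p^4*s^2-100*p^2*t^2"

definition D2 :: "real \<Rightarrow> real \<Rightarrow> real \<Rightarrow> real \<Rightarrow> real \<Rightarrow> real" where
  "D2 p q r s t = 24*p^2*q^4*s-1100*q^3*r*t+800*p^3*q*s*t-1735*p^2*q^2*r*t-3*p^2*q*r^2*s
    +20*p*q^3*r*s-600*p^2*r*s*t-1150*p*q^2*s*t+5475*p*q*r^2*t-1380*p*q*r*s^2+1500*q*r*s*t
    +6*p^3*q*r^3+p^4*q^2*r^2-128*p^6*r*t+660*p*q^4*t-136*p^5*s*t-3*p^4*q^3*s-236*p^4*q*s^2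
    +337*p^2*q^2*s^2+48*p^5*q^2*t-357*p^3*q^3*t-12*p^4*r^2*s-45*p*r^3*s+60*q^2*r^2*s
    -8*p^2*q^3*r^2-500*p^2*q*t^2-24*p*q^2*r^3-1380*p^3*r^2*t+408*p^3*r*s^2-4*p^5*q*r*s
    +1028*p^4*q*r*t+11*p^3*q^2*r*s+36*p^6*s^2+100*p^4*t^2+9*p^2*r^4-48*q^5*s+16*q^4*r^2
    +160*q^3*s^2+625*q^2*t^2-3375*r^3*t+900*r^2*s^2"

definition C21 :: "real \<Rightarrow> real \<Rightarrow> real \<Rightarrow> real \<Rightarrow> real \<Rightarrow> real" where
  "C21 p q r s t = 6*s*p^3+4*q^2*r-3*p*r^2-21*s*p*q+30*s*r+10*p^2*t-25*t*q-p^2*r*q"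

definition C20 :: "real \<Rightarrow> real \<Rightarrow> real \<Rightarrow> real \<Rightarrow> real \<Rightarrow> real" where
  "C20 p q r s t = -16*t*p^3-75*t*r+3*p*s*r-4*q^2*s+55*t*p*q+p^2*s*q"

definition C3 :: "real \<Rightarrow> real \<Rightarrow> real \<Rightarrow> real \<Rightarrow> real \<Rightarrow> real" where
  "C3 p q r s t = -34*p^2*r*q+8*r*p^4+44*s*p*q-3*p^3*q^2-8*s*p^3+12*p*q^3+57*p*r^2
    -16*q^2*r+100*t*q-120*s*r-40*p^2*t"

end

theory Submission
  imports Defs "HOL-Computational_Algebra.Fundamental_Theorem_Algebra" "HOL-Combinatorics.Permutations"
begin

definition L1g :: "'a::comm_ring_1 \<Rightarrow> 'a \<Rightarrow> 'a \<Rightarrow> 'a \<Rightarrow> 'a \<Rightarrow> 'a" where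
  "L1g p q r s t = -264*p*s^2*r-12*p^3*t*q^2+36*r^3*p*q-124*s*r*p*q^2+28*s*r*p^3*q+260*s*p*t*q
    -132*p^2*q*r*t+240*p*r^2*t+234*s*q*r^2+32*p^4*t*r+48*p*t*q^3-56*s*p^3*t-80*q^2*r*t
    +194*q*s^2*p^2-600*s*t*r-6*q^3*s*p^2+2*p^2*q^2*r^2-12*s*r^2*p^2-54*r^4+320*s^3
    -8*q^3*r^2-8*r^3*p^3+250*q*t^2-176*q^2*s^2+24*q^4*s-36*p^4*s^2-100*p^2*t^2"
definition L2g :: "'a::comm_ring_1 \<Rightarrow> 'a \<Rightarrow> 'a \<Rightarrow> 'a \<Rightarrow> 'a \<Rightarrow> 'a" where
  "L2g p q r s t = 40*q*s-16*p^2*s-8*r*p^3+38*r*p*q+3*p^2*q^2-12*q^3-45*r^2"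
definition D2g :: "'a::comm_ring_1 \<Rightarrow> 'a \<Rightarrow> 'a \<Rightarrow> 'a \<Rightarrow> 'a \<Rightarrow> 'a" where
  "D2g p q r s t = 24*p^2*q^4*s-1100*q^3*r*t+800*p^3*q*s*t-1735*p^2*q^2*r*t-3*p^2*q*r^2*s
    +20*p*q^3*r*s-600*p^2*r*s*t-1150*p*q^2*s*t+5475*p*q*r^2*t-1380*p*q*r*s^2+1500*q*r*s*t
    +6*p^3*q*r^3+p^4*q^2*r^2-128*p^6*r*t+660*p*q^4*t-136*p^5*s*t-3*p^4*q^3*s-236*p^4*q*s^2
    +337*p^2*q^2*s^2+48*p^5*q^2*t-357*p^3*q^3*t-12*p^4*r^2*s-45*p*r^3*s+60*q^2*r^2*s
    -8*p^2*q^3*r^2-500*p^2*q*t^2-24*p*q^2*r^3-1380*p^3*r^2*t+408*p^3*r*s^2-4*p^5*q*r*s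
    +1028*p^4*q*r*t+11*p^3*q^2*r*s+36*p^6*s^2+100*p^4*t^2+9*p^2*r^4-48*q^5*s+16*q^4*r^2
    +160*q^3*s^2+625*q^2*t^2-3375*r^3*t+900*r^2*s^2"
definition C21g :: "'a::comm_ring_1 \<Rightarrow> 'a \<Rightarrow> 'a \<Rightarrow> 'a \<Rightarrow> 'a \<Rightarrow> 'a" where
  "C21g p q r s t = 6*s*p^3+4*q^2*r-3*p*r^2-21*s*p*q+30*s*r+10*p^2*t-25*t*q-p^2*r*q"
definition C20g :: "'a::comm_ring_1 \<Rightarrow> 'a \<Rightarrow> 'a \<Rightarrow> 'a \<Rightarrow> 'a \<Rightarrow> 'a" where
  "C20g p q r s t = -16*t*p^3-75*t*r+3*p*s*r-4*q^2*s+55*t*p*q+p^2*s*q"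
definition C3g :: "'a::comm_ring_1 \<Rightarrow> 'a \<Rightarrow> 'a \<Rightarrow> 'a \<Rightarrow> 'a \<Rightarrow> 'a" where
  "C3g p q r s t = -34*p^2*r*q+8*r*p^4+44*s*p*q-3*p^3*q^2-8*s*p^3+12*p*q^3+57*p*r^2
    -16*q^2*r+100*t*q-120*s*r-40*p^2*t"

lemma id_L2: fixes S P e :: complex shows
  "L2g (-(2*S+e)) (S^2+2*P+2*S*e) (-(2*S*P+e*(S^2+2*P))) (P^2+2*S*P*e) (-(e*P^2))
   = 4*(S^2-4*P)*(P-e*S+e^2)^2"
  unfolding L2g_def by algebra
lemma id_C3: fixes S P e :: complex shows
  "C3g (-(2*S+e)) (S^2+2*P+2*S*e) (-(2*S*P+e*(S^2+2*P))) (P^2+2*S*P*e) (-(e*P^2))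
   = 4*(S^2-4*P)*(P-e*S+e^2)^2 * e"
  unfolding C3g_def by algebra
lemma id_C21: fixes S P e :: complex shows
  "2 * C21g (-(2*S+e)) (S^2+2*P+2*S*e) (-(2*S*P+e*(S^2+2*P))) (P^2+2*S*P*e) (-(e*P^2))
   = 4*(S^2-4*P)*(P-e*S+e^2)^2 * S"
  unfolding C21g_def by algebra
lemma id_C20: fixes S P e :: complex shows
  "C20g (-(2*S+e)) (S^2+2*P+2*S*e) (-(2*S*P+e*(S^2+2*P))) (P^2+2*S*P*e) (-(e*P^2))
   = 4*(S^2-4*P)*(P-e*S+e^2)^2 * P"
  unfolding C20g_def by algebra
lemma id_D2: fixes S P e :: complex shows
  "D2g (-(2*S+e)) (S^2+2*P+2*S*e) (-(2*S*P+e*(S^2+2*P))) (P^2+2*S*P*e) (-(e*P^2))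
   = 4*(S^2-4*P)^3*(P-e*S+e^2)^4"
  unfolding D2g_def by algebra
lemma id_D2_triple: fixes a y z :: complex shows
  "D2g (-(3*a+y+z)) (3*a^2 + 3*a*(y+z) + y*z) (-(a^3 + 3*a^2*(y+z) + 3*a*y*z))
    (a^3*(y+z) + 3*a^2*y*z) (-(a^3*y*z)) = 0"
  unfolding D2g_def by algebra
lemma prod3_poly: fixes a b c :: "'a::comm_ring_1" shows
  "[:-c,1:]*[:-a,1:]^2*[:-b,1:]^2 = [:-(c*(a*b)^2), (a*b)^2 + 2*(a+b)*(a*b)*c,
     -(2*(a+b)*(a*b) + c*((a+b)^2+2*(a*b))), (a+b)^2+2*(a*b)+2*(a+b)*c, -(2*(a+b)+c), 1:]"
  by (simp add: power2_eq_square algebra_simps)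

definition Concl :: "real \<Rightarrow> real \<Rightarrow> real \<Rightarrow> real \<Rightarrow> real \<Rightarrow> bool" where
 "Concl p q r s t \<longleftrightarrow> (let f = quintic p q r s t; l = L2 p q r s t; c21 = C21 p q r s t;
             c20 = C20 p q r s t; c3 = C3 p q r s t; c = c3 / l;
             F4 = c3^2 / l^2 + c20 / l - 2 * c3 * c21 / l^2;
             F5 = (2 * c3 - 2 * c21) / l
         in \<exists>a b. a < b \<and> c \<noteq> a \<and> c \<noteq> b \<and>
              f = [:- c, 1:] * [:- a, 1:]^2 * [:- b, 1:]^2 \<and>
              (\<forall>x. l * x^2 - 2 * c21 * x + c20 = 0 \<longleftrightarrow> x = a \<or> x = b) \<and>
              (F4 > 0 \<and> F5 < 0 \<longrightarrow> c < a) \<and>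
              (F4 < 0 \<longrightarrow> a < c \<and> c < b) \<and>
              (F4 > 0 \<and> F5 > 0 \<longrightarrow> b < c))"

lemma DDreal:
  fixes p q r s t S P c :: real
  assumes hp: "p = -(2*S+c)" and hq: "q = S^2+2*P+2*S*c" and hr: "r = -(2*S*P+c*(S^2+2*P))"
    and hs: "s = P^2+2*S*P*c" and ht: "t = -(c*P^2)"
    and l0: "L2 p q r s t \<noteq> 0"
    and hc: "c = C3 p q r s t / L2 p q r s t"
    and hS: "S = 2 * C21 p q r s t / L2 p q r s t"
    and hP: "P = C20 p q r s t / L2 p q r s t"
    and hD: "D2 p q r s t = 4*(S^2-4*P)^3*(P-c*S+c^2)^4"
    and D0: "D2 p q r s t > 0"
  shows "Concl p q r s t"
proof -
  define l where "l = L2 p q r s t"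
  define c21 where "c21 = C21 p q r s t"
  define c20 where "c20 = C20 p q r s t"
  define c3 where "c3 = C3 p q r s t"
  define \<Delta> where "\<Delta> = S^2 - 4*P"
  define w where "w = P-c*S+c^2"
  have l0': "l \<noteq> 0" using l0 by (simp add: l_def)
  have c3e: "c3 = c * l" using hc l0' by (simp add: c3_def l_def)
  have c21e: "2*c21 = S * l" using hS l0' by (simp add: c21_def l_def field_simps)
  have c20e: "c20 = P * l" using hP l0' by (simp add: c20_def l_def)
  have pos: "4*\<Delta>^3*w^4 > 0" using hD D0 by (simp add: \<Delta>_def w_def)
  have w0: "w \<noteq> 0" using pos by auto
  have "w^4 > 0" using w0 by simp
  hence "\<Delta>^3 > 0" using pos by (simp add: zero_less_mult_iff)
  hence Dp: "\<Delta> > 0" by (simp add: zero_less_power_eq)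
  define a where "a = (S - sqrt \<Delta>)/2"
  define b where "b = (S + sqrt \<Delta>)/2"
  have sq: "sqrt \<Delta> > 0" using Dp by simp
  have sq2: "sqrt \<Delta> ^2 = \<Delta>" using Dp by simp
  have ab: "a < b" using sq by (simp add: a_def b_def)
  have Sab: "S = a + b" by (simp add: a_def b_def field_simps)
  have Pab: "P = a * b"
  proof -
    have "a * b = (S^2 - sqrt \<Delta>^2)/4" by (simp add: a_def b_def power2_eq_square field_simps)
    thus ?thesis using sq2 by (simp add: \<Delta>_def)
  qed
  have wab: "w = (c-a)*(c-b)" by (simp add: w_def Sab Pab algebra_simps power2_eq_square)
  have ca: "c \<noteq> a" and cb: "c \<noteq> b" using w0 wab by auto
  have fq: "quintic p q r s t = [:- c, 1:] * [:- a, 1:]^2 * [:- b, 1:]^2"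
    unfolding prod3_poly quintic_def hp hq hr hs ht Sab Pab by simp
  have quad: "l * x^2 - 2 * c21 * x + c20 = 0 \<longleftrightarrow> x = a \<or> x = b" for x
  proof -
    have "l * x^2 - 2 * c21 * x + c20 = l * ((x-a)*(x-b))"
      using c21e c20e by (simp add: Sab Pab algebra_simps power2_eq_square)
    thus ?thesis using l0' by simp
  qed
  have F4: "c3^2 / l^2 + c20 / l - 2 * c3 * c21 / l^2 = (c-a)*(c-b)"
  proof -
    have "c3^2 / l^2 + c20 / l - 2 * c3 * c21 / l^2 = c^2 + P - c*S"
      using l0' c3e c20e c21e by (simp add: field_simps power2_eq_square)
    thus ?thesis by (simp add: Sab Pab algebra_simps power2_eq_square)
  qed
  have F5: "(2 * c3 - 2 * c21) / l = (c-a) + (c-b)"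
  proof -
    have "(2 * c3 - 2 * c21) / l = 2*c - S"
      using l0' c3e c21e by (simp add: field_simps)
    thus ?thesis by (simp add: Sab)
  qed
  have o1: "(c-a)*(c-b) > 0 \<and> (c-a) + (c-b) < 0 \<longrightarrow> c < a"
    by (auto simp: zero_less_mult_iff)
  have o2: "(c-a)*(c-b) < 0 \<longrightarrow> a < c \<and> c < b"
    using ab by (auto simp: mult_less_0_iff)
  have o3: "(c-a)*(c-b) > 0 \<and> (c-a) + (c-b) > 0 \<longrightarrow> b < c"
    using ab by (auto simp: zero_less_mult_iff)
  have cc: "c3 / l = c" using c3e l0' by simp
  show ?thesis
    unfolding Concl_def Let_def
    apply (fold l_def c21_def c20_def c3_def)
    unfolding F4 F5 cc
    apply (rule exI[of _ a], rule exI[of _ b])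
    using ab ca cb fq quad o1 o2 o3 by blast
qed

lemma gen_L1: "complex_of_real (L1 p q r s t) = L1g (of_real p) (of_real q) (of_real r) (of_real s) (of_real t)"
  by (simp add: L1_def L1g_def)
lemma gen_L2: "complex_of_real (L2 p q r s t) = L2g (of_real p) (of_real q) (of_real r) (of_real s) (of_real t)"
  by (simp add: L2_def L2g_def)
lemma gen_D2: "complex_of_real (D2 p q r s t) = D2g (of_real p) (of_real q) (of_real r) (of_real s) (of_real t)"
  by (simp add: D2_def D2g_def)
lemma gen_C3: "complex_of_real (C3 p q r s t) = C3g (of_real p) (of_real q) (of_real r) (of_real s) (of_real t)"
  by (simp add: C3_def C3g_def)
lemma gen_C21: "complex_of_real (C21 p q r s t) = C21g (of_real p) (of_real q) (of_real r) (of_real s) (of_real t)"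
  by (simp add: C21_def C21g_def)
lemma gen_C20: "complex_of_real (C20 p q r s t) = C20g (of_real p) (of_real q) (of_real r) (of_real s) (of_real t)"
  by (simp add: C20_def C20g_def)

lemma DD:
  fixes S P e :: complex and p q r s t :: real
  assumes hp: "of_real p = -(2*S+e)" and hq: "of_real q = S^2+2*P+2*S*e"
    and hr: "of_real r = -(2*S*P+e*(S^2+2*P))"
    and hs: "of_real s = P^2+2*S*P*e" and ht: "of_real t = -(e*P^2)"
    and l0: "L2 p q r s t \<noteq> 0" and D0: "D2 p q r s t > 0"
  shows "Concl p q r s t"
proof -
  define K where "K = 4*(S^2-4*P)*(P-e*S+e^2)^2"
  have hL: "complex_of_real (L2 p q r s t) = K"
    unfolding gen_L2 hp hq hr hs ht K_def by (rule id_L2)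
  have hC3: "complex_of_real (C3 p q r s t) = K * e"
    unfolding gen_C3 hp hq hr hs ht K_def by (rule id_C3)
  have hC21: "2 * complex_of_real (C21 p q r s t) = K * S"
    unfolding gen_C21 hp hq hr hs ht K_def by (rule id_C21)
  have hC20: "complex_of_real (C20 p q r s t) = K * P"
    unfolding gen_C20 hp hq hr hs ht K_def by (rule id_C20)
  have hD2: "complex_of_real (D2 p q r s t) = 4*(S^2-4*P)^3*(P-e*S+e^2)^4"
    unfolding gen_D2 hp hq hr hs ht by (rule id_D2)
  have K0: "K \<noteq> 0" using l0 hL by auto
  define c where "c = C3 p q r s t / L2 p q r s t"
  define Sr where "Sr = 2 * C21 p q r s t / L2 p q r s t"
  define Pr where "Pr = C20 p q r s t / L2 p q r s t"
  have ce: "complex_of_real c = e" unfolding c_def using K0 by (simp add: hL hC3)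
  have Se: "complex_of_real Sr = S" unfolding Sr_def using K0 hC21
    by (simp add: hL)
  have Pe: "complex_of_real Pr = P" unfolding Pr_def using K0 by (simp add: hL hC20)
  have rp: "p = -(2*Sr+c)"
  proof -
    have "complex_of_real p = complex_of_real (-(2*Sr+c))" using hp ce Se by simp
    thus ?thesis by (simp only: of_real_eq_iff)
  qed
  have rq: "q = Sr^2+2*Pr+2*Sr*c"
  proof -
    have "complex_of_real q = complex_of_real (Sr^2+2*Pr+2*Sr*c)" using hq ce Se Pe by simp
    thus ?thesis by (simp only: of_real_eq_iff)
  qed
  have rr: "r = -(2*Sr*Pr+c*(Sr^2+2*Pr))"
  proof -
    have "complex_of_real r = complex_of_real (-(2*Sr*Pr+c*(Sr^2+2*Pr)))" using hr ce Se Pe by simp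
    thus ?thesis by (simp only: of_real_eq_iff)
  qed
  have rs: "s = Pr^2+2*Sr*Pr*c"
  proof -
    have "complex_of_real s = complex_of_real (Pr^2+2*Sr*Pr*c)" using hs ce Se Pe by simp
    thus ?thesis by (simp only: of_real_eq_iff)
  qed
  have rt: "t = -(c*Pr^2)"
  proof -
    have "complex_of_real t = complex_of_real (-(c*Pr^2))" using ht ce Pe by simp
    thus ?thesis by (simp only: of_real_eq_iff)
  qed
  have rD: "D2 p q r s t = 4*(Sr^2-4*Pr)^3*(Pr-c*Sr+c^2)^4"
  proof -
    have "complex_of_real (D2 p q r s t) = complex_of_real (4*(Sr^2-4*Pr)^3*(Pr-c*Sr+c^2)^4)"
      using hD2 ce Se Pe by simp
    thus ?thesis by (simp only: of_real_eq_iff)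
  qed
  show ?thesis
    by (rule DDreal[OF rp rq rr rs rt l0 c_def Sr_def Pr_def rD D0])
qed

lemma triple:
  fixes a y z :: complex and p q r s t :: real
  assumes hp: "of_real p = -(3*a+y+z)" and hq: "of_real q = 3*a^2 + 3*a*(y+z) + y*z"
    and hr: "of_real r = -(a^3 + 3*a^2*(y+z) + 3*a*y*z)"
    and hs: "of_real s = a^3*(y+z) + 3*a^2*y*z" and ht: "of_real t = -(a^3*y*z)"
  shows "D2 p q r s t = 0"
proof -
  have "complex_of_real (D2 p q r s t) = 0"
    unfolding gen_D2 hp hq hr hs ht by (rule id_D2_triple)
  thus ?thesis by simp
qed

lemma id_L1: fixes a b c e :: complex shows
  "L1g (-((b+c+e)+2*a)) ((b*c+b*e+c*e) + 2*a*(b+c+e) + a^2) (-(b*c*e + 2*a*(b*c+b*e+c*e) + a^2*(b+c+e)))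
     (2*a*(b*c*e) + a^2*(b*c+b*e+c*e)) (-(a^2*(b*c*e))) = 2 * ((a-b)*(a-c)*(a-e)*(b-c)*(b-e)*(c-e))^2"
  unfolding L1g_def by algebra

lemma prod5_poly: fixes a b c e :: "'a::comm_ring_1" shows
  "[:-a,1:]^2*[:-b,1:]*[:-c,1:]*[:-e,1:] = [:-(a^2*(b*c*e)), 2*a*(b*c*e) + a^2*(b*c+b*e+c*e),
     -(b*c*e + 2*a*(b*c+b*e+c*e) + a^2*(b+c+e)), (b*c+b*e+c*e) + 2*a*(b+c+e) + a^2, -((b+c+e)+2*a), 1:]"
  by (simp add: power2_eq_square algebra_simps)

lemma case2:
  fixes a b c e :: complex and p q r s t :: real
  assumes hF: "map_poly complex_of_real (quintic p q r s t) = [:-a,1:]^2*[:-b,1:]*[:-c,1:]*[:-e,1:]"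
    and L10: "L1 p q r s t = 0" and l0: "L2 p q r s t \<noteq> 0" and D0: "D2 p q r s t > 0"
  shows "Concl p q r s t"
proof -
  have "map_poly complex_of_real (quintic p q r s t) = [:of_real t, of_real s, of_real r, of_real q, of_real p, 1:]"
    by (simp add: quintic_def map_poly_pCons)
  with hF have "[:of_real t, of_real s, of_real r, of_real q, of_real p, 1:] = [:-(a^2*(b*c*e)), 2*a*(b*c*e) + a^2*(b*c+b*e+c*e),
     -(b*c*e + 2*a*(b*c+b*e+c*e) + a^2*(b+c+e)), (b*c+b*e+c*e) + 2*a*(b+c+e) + a^2, -((b+c+e)+2*a), 1::complex:]"
    by (simp only: prod5_poly)
  hence hp: "complex_of_real p = -((b+c+e)+2*a)" and hq: "complex_of_real q = (b*c+b*e+c*e) + 2*a*(b+c+e) + a^2"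
    and hr: "complex_of_real r = -(b*c*e + 2*a*(b*c+b*e+c*e) + a^2*(b+c+e))"
    and hs: "complex_of_real s = 2*a*(b*c*e) + a^2*(b*c+b*e+c*e)"
    and ht: "complex_of_real t = -(a^2*(b*c*e))"
    by (simp_all only: pCons_eq_iff)
  have "complex_of_real (L1 p q r s t) = 2 * ((a-b)*(a-c)*(a-e)*(b-c)*(b-e)*(c-e))^2"
    unfolding gen_L1 hp hq hr hs ht by (rule id_L1)
  hence "(a-b)*(a-c)*(a-e)*(b-c)*(b-e)*(c-e) = 0" using L10 by simp
  hence "b = a \<or> c = a \<or> e = a \<or> c = b \<or> e = b \<or> e = c" by auto
  then show ?thesis
  proof (elim disjE)
    assume E: "b = a"
    have p': "complex_of_real p = -(3*a+c+e)" unfolding hp E by algebra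
    have q': "complex_of_real q = 3*a^2 + 3*a*(c+e) + c*e" unfolding hq E by algebra
    have r': "complex_of_real r = -(a^3 + 3*a^2*(c+e) + 3*a*c*e)" unfolding hr E by algebra
    have s': "complex_of_real s = a^3*(c+e) + 3*a^2*c*e" unfolding hs E by algebra
    have t': "complex_of_real t = -(a^3*c*e)" unfolding ht E by algebra
    have "D2 p q r s t = 0" by (rule triple[OF p' q' r' s' t'])
    thus ?thesis using D0 by simp
  next
    assume E: "c = a"
    have p': "complex_of_real p = -(3*a+b+e)" unfolding hp E by algebra
    have q': "complex_of_real q = 3*a^2 + 3*a*(b+e) + b*e" unfolding hq E by algebra
    have r': "complex_of_real r = -(a^3 + 3*a^2*(b+e) + 3*a*b*e)" unfolding hr E by algebra
    have s': "complex_of_real s = a^3*(b+e) + 3*a^2*b*e" unfolding hs E by algebra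
    have t': "complex_of_real t = -(a^3*b*e)" unfolding ht E by algebra
    have "D2 p q r s t = 0" by (rule triple[OF p' q' r' s' t'])
    thus ?thesis using D0 by simp
  next
    assume E: "e = a"
    have p': "complex_of_real p = -(3*a+b+c)" unfolding hp E by algebra
    have q': "complex_of_real q = 3*a^2 + 3*a*(b+c) + b*c" unfolding hq E by algebra
    have r': "complex_of_real r = -(a^3 + 3*a^2*(b+c) + 3*a*b*c)" unfolding hr E by algebra
    have s': "complex_of_real s = a^3*(b+c) + 3*a^2*b*c" unfolding hs E by algebra
    have t': "complex_of_real t = -(a^3*b*c)" unfolding ht E by algebra
    have "D2 p q r s t = 0" by (rule triple[OF p' q' r' s' t'])
    thus ?thesis using D0 by simp
  next
    assume E: "c = b"
    have p': "complex_of_real p = -(2*(a+b)+e)" unfolding hp E by algebra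
    have q': "complex_of_real q = (a+b)^2+2*(a*b)+2*(a+b)*e" unfolding hq E by algebra
    have r': "complex_of_real r = -(2*(a+b)*(a*b)+e*((a+b)^2+2*(a*b)))" unfolding hr E by algebra
    have s': "complex_of_real s = (a*b)^2+2*(a+b)*(a*b)*e" unfolding hs E by algebra
    have t': "complex_of_real t = -(e*(a*b)^2)" unfolding ht E by algebra
    show ?thesis by (rule DD[OF p' q' r' s' t' l0 D0])
  next
    assume E: "e = b"
    have p': "complex_of_real p = -(2*(a+b)+c)" unfolding hp E by algebra
    have q': "complex_of_real q = (a+b)^2+2*(a*b)+2*(a+b)*c" unfolding hq E by algebra
    have r': "complex_of_real r = -(2*(a+b)*(a*b)+c*((a+b)^2+2*(a*b)))" unfolding hr E by algebra
    have s': "complex_of_real s = (a*b)^2+2*(a+b)*(a*b)*c" unfolding hs E by algebra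
    have t': "complex_of_real t = -(c*(a*b)^2)" unfolding ht E by algebra
    show ?thesis by (rule DD[OF p' q' r' s' t' l0 D0])
  next
    assume E: "e = c"
    have p': "complex_of_real p = -(2*(a+c)+b)" unfolding hp E by algebra
    have q': "complex_of_real q = (a+c)^2+2*(a*c)+2*(a+c)*b" unfolding hq E by algebra
    have r': "complex_of_real r = -(2*(a+c)*(a*c)+b*((a+c)^2+2*(a*c)))" unfolding hr E by algebra
    have s': "complex_of_real s = (a*c)^2+2*(a+c)*(a*c)*b" unfolding hs E by algebra
    have t': "complex_of_real t = -(b*(a*c)^2)" unfolding ht E by algebra
    show ?thesis by (rule DD[OF p' q' r' s' t' l0 D0])
  qed
qed



lemma prod5: "(\<Prod>i<(5::nat). g i) = g 0 * g 1 * g 2 * g 3 * (g 4 :: 'a::comm_monoid_mult)"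
  by (simp add: eval_nat_numeral ac_simps)

lemma list5: assumes "length al = 5" obtains x0 x1 x2 x3 x4 where "al = [x0,x1,x2,x3,x4]"
  using assms by (auto simp: eval_nat_numeral length_Suc_conv)

lemma proots_list: fixes al :: "complex list"
  assumes "length al = 5" shows "proots (\<Prod>i<5. [:-al!i,1:]) = mset al"
proof -
  obtain x0 x1 x2 x3 x4 where al: "al = [x0,x1,x2,x3,x4]" using list5[OF assms] .
  have "proots (\<Prod>i<5. [:-al!i,1:]) = (\<Sum>i<5. proots [:-al!i,1:])" by (rule proots_prod) simp
  also have "\<dots> = (\<Sum>i<5. {#al!i#})" by simp
  also have "\<dots> = mset al" unfolding al by (simp add: eval_nat_numeral)
  finally show ?thesis .
qed

lemma pm: "(\<Prod>x\<in>#mset al. g x) = (\<Prod>i<length al. g (al!i) :: 'a::comm_monoid_mult)"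
proof -
  have "(\<Prod>x\<in>#mset al. g x) = prod_list (map g al)" by (metis mset_map prod_mset_prod_list)
  also have "\<dots> = (\<Prod>i<length al. g (al!i))" by (simp add: prod.list_conv_set_nth atLeast0LessThan)
  finally show ?thesis .
qed

definition dd :: "complex list \<Rightarrow> complex" where "dd al = (\<Prod>j<5. \<Prod>i<j. (al!i - al!j)^2)"

lemma dd_zero: assumes "dd [x0,x1,x2,x3,x4] = 0"
  shows "x0 = x1 \<or> x0 = x2 \<or> x0 = x3 \<or> x0 = x4 \<or> x1 = x2 \<or> x1 = x3 \<or> x1 = x4 \<or> x2 = x3 \<or> x2 = x4 \<or> x3 = x4"
  using assms by (auto simp: dd_def eval_nat_numeral)


lemma dd_perm:
  assumes sp: "\<sigma> permutes {..<5}" and len: "length xs = 5"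
  shows "dd (permute_list \<sigma> xs) = dd xs"
proof -
  let ?T = "Sigma {..<5::nat} (\<lambda>j. {..<j})"
  let ?G = "\<lambda>(j,i). (xs!i - xs!j)^2"
  define h where "h = (\<lambda>(j::nat,i::nat). (max (\<sigma> j) (\<sigma> i), min (\<sigma> j) (\<sigma> i)))"
  have sig: "\<sigma> i < 5" if "i < 5" for i using permutes_in_image[OF sp] that by auto
  have inj: "i = j" if "\<sigma> i = \<sigma> j" for i j using permutes_inj[OF sp] that by (auto dest: injD)
  have hT: "h ` ?T \<subseteq> ?T"
  proof
    fix x assume "x \<in> h ` ?T"
    then obtain j i where ji: "i < j" "j < 5" and x: "x = h (j,i)" by auto
    have "\<sigma> i \<noteq> \<sigma> j" using inj ji by fastforce
    thus "x \<in> ?T" using sig ji unfolding x h_def by (auto simp: max_def min_def)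
  qed
  have injh: "inj_on h ?T"
  proof (rule inj_onI)
    fix x y assume "x \<in> ?T" "y \<in> ?T" "h x = h y"
    then obtain j i j' i' where x: "x = (j,i)" "i < j" and y: "y = (j',i')" "i' < j'"
      and e: "max (\<sigma> j) (\<sigma> i) = max (\<sigma> j') (\<sigma> i')" "min (\<sigma> j) (\<sigma> i) = min (\<sigma> j') (\<sigma> i')"
      by (auto simp: h_def)
    have "(\<sigma> j = \<sigma> j' \<and> \<sigma> i = \<sigma> i') \<or> (\<sigma> j = \<sigma> i' \<and> \<sigma> i = \<sigma> j')"
      using e by (auto simp: max_def min_def split: if_splits)
    hence "(j = j' \<and> i = i') \<or> (j = i' \<and> i = j')" using inj by blast
    thus "x = y" using x y by auto
  qed
  have fin: "finite ?T" by simp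
  have "h ` ?T = ?T"
    using card_subset_eq[OF fin hT] card_image[OF injh] by simp
  hence bij: "bij_betw h ?T ?T" using injh by (simp add: bij_betw_def)
  have eq: "?G (h x) = (\<lambda>(j,i). (permute_list \<sigma> xs ! i - permute_list \<sigma> xs ! j)^2) x" if "x \<in> ?T" for x
  proof -
    obtain j i where x: "x = (j,i)" "i < j" "j < 5" using \<open>x \<in> ?T\<close> by auto
    have "?G (h x) = (xs ! \<sigma> i - xs ! \<sigma> j)^2"
      unfolding x h_def by (cases "\<sigma> i \<le> \<sigma> j") (auto simp: max_def min_def power2_commute)
    also have "\<dots> = (permute_list \<sigma> xs ! i - permute_list \<sigma> xs ! j)^2"
      using x len sp by (simp add: permute_list_nth)
    finally show ?thesis using x by simp
  qed
  have "dd (permute_list \<sigma> xs) = (\<Prod>x\<in>?T. (\<lambda>(j,i). (permute_list \<sigma> xs ! i - permute_list \<sigma> xs ! j)^2) x)"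
    unfolding dd_def by (subst prod.Sigma) auto
  also have "\<dots> = (\<Prod>x\<in>?T. ?G (h x))" using eq by (intro prod.cong) auto
  also have "\<dots> = (\<Prod>x\<in>?T. ?G x)" by (rule prod.reindex_bij_betw[OF bij])
  also have "\<dots> = dd xs" unfolding dd_def by (subst prod.Sigma) auto
  finally show ?thesis .
qed

lemma disc_zero:
  assumes "disc5 p q r s t = 0"
  obtains a b c e :: complex where
    "map_poly complex_of_real (quintic p q r s t) = [:-a,1:]^2*[:-b,1:]*[:-c,1:]*[:-e,1:]"
proof -
  define F where "F = map_poly complex_of_real (quintic p q r s t)"
  have Fe: "F = [:of_real t, of_real s, of_real r, of_real q, of_real p, 1:]"
    by (simp add: F_def quintic_def map_poly_pCons)
  have degF: "degree F = 5" and lcF: "lead_coeff F = 1" by (simp_all add: Fe eval_nat_numeral)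
  have dec: "F = (\<Prod>x\<in>#proots F. [:-x, 1:])"
    using complex_poly_decompose_multiset[of F] lcF by simp
  obtain al where mal: "mset al = proots F" using ex_mset by blast
  have len: "length al = 5" using mal size_proots_complex[of F] degF by (metis size_mset)
  obtain x0 x1 x2 x3 x4 where al: "al = [x0,x1,x2,x3,x4]" using list5[OF len] .
  have fac: "F = (\<Prod>i<5. [:-al!i,1:])"
    using dec unfolding mal[symmetric] pm len .
  let ?P = "\<lambda>d. \<exists>al :: complex list. length al = 5 \<and>
      map_poly complex_of_real (quintic p q r s t) = (\<Prod>i<5. [:- al ! i, 1:]) \<and>
      d = (\<Prod>j<5. \<Prod>i<j. (al ! i - al ! j)^2)"
  have uniq: "d = dd al" if "?P d" for d
  proof -
    obtain al' where len': "length al' = 5" and f': "F = (\<Prod>i<5. [:- al' ! i, 1:])"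
      and d: "d = dd al'" using \<open>?P d\<close> unfolding F_def dd_def by blast
    have "mset al' = mset al" using proots_list[OF len'] proots_list[OF len] f' fac by simp
    then obtain \<sigma> where s1: "\<sigma> permutes {..<length al}" and s2: "permute_list \<sigma> al = al'"
      by (rule mset_eq_permutation)
    show ?thesis using dd_perm[of \<sigma> al] s1 s2 len d by simp
  qed
  have P0: "?P (dd al)"
  proof (intro exI[of _ al] conjI)
    show "length al = 5" by (rule len)
    show "map_poly complex_of_real (quintic p q r s t) = (\<Prod>i<5. [:- al ! i, 1:])" using fac by (simp only: F_def)
    show "dd al = (\<Prod>j<5. \<Prod>i<j. (al ! i - al ! j)^2)" by (simp only: dd_def)
  qed
  have "disc5 p q r s t = dd al"
    unfolding disc5_def by (rule the1_equality[OF ex1I[of ?P, OF P0 uniq] P0])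
  hence "dd [x0,x1,x2,x3,x4] = 0" using assms al by simp
  hence cases: "x0 = x1 \<or> x0 = x2 \<or> x0 = x3 \<or> x0 = x4 \<or> x1 = x2 \<or> x1 = x3 \<or> x1 = x4 \<or> x2 = x3 \<or> x2 = x4 \<or> x3 = x4"
    by (rule dd_zero)
  have F5: "map_poly complex_of_real (quintic p q r s t) = [:-x0,1:]*[:-x1,1:]*[:-x2,1:]*[:-x3,1:]*[:-x4,1:]"
    using fac unfolding F_def al prod5 by (simp del: mult_pCons_left mult_pCons_right)
  from cases show ?thesis
  proof (elim disjE)
    assume "x0 = x1"
    thus ?thesis using F5 by (intro that[of x0 x2 x3 x4]) (simp only: power2_eq_square ac_simps)
  next
    assume "x0 = x2"
    thus ?thesis using F5 by (intro that[of x0 x1 x3 x4]) (simp only: power2_eq_square ac_simps)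
  next
    assume "x0 = x3"
    thus ?thesis using F5 by (intro that[of x0 x1 x2 x4]) (simp only: power2_eq_square ac_simps)
  next
    assume "x0 = x4"
    thus ?thesis using F5 by (intro that[of x0 x1 x2 x3]) (simp only: power2_eq_square ac_simps)
  next
    assume "x1 = x2"
    thus ?thesis using F5 by (intro that[of x1 x0 x3 x4]) (simp only: power2_eq_square ac_simps)
  next
    assume "x1 = x3"
    thus ?thesis using F5 by (intro that[of x1 x0 x2 x4]) (simp only: power2_eq_square ac_simps)
  next
    assume "x1 = x4"
    thus ?thesis using F5 by (intro that[of x1 x0 x2 x3]) (simp only: power2_eq_square ac_simps)
  next
    assume "x2 = x3"
    thus ?thesis using F5 by (intro that[of x2 x0 x1 x4]) (simp only: power2_eq_square ac_simps)
  next
    assume "x2 = x4"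
    thus ?thesis using F5 by (intro that[of x2 x0 x1 x3]) (simp only: power2_eq_square ac_simps)
  next
    assume "x3 = x4"
    thus ?thesis using F5 by (intro that[of x3 x0 x1 x2]) (simp only: power2_eq_square ac_simps)
  qed
qed
theorem mainTheorem11:
  fixes p q r s t :: real
  assumes "disc5 p q r s t = 0"
    and "L1 p q r s t = 0"
    and "L2 p q r s t \<noteq> 0"
    and "D2 p q r s t > 0"
  shows "let f = quintic p q r s t; l = L2 p q r s t; c21 = C21 p q r s t;
             c20 = C20 p q r s t; c3 = C3 p q r s t; c = c3 / l;
             F4 = c3^2 / l^2 + c20 / l - 2 * c3 * c21 / l^2;
             F5 = (2 * c3 - 2 * c21) / l
         in \<exists>a b. a < b \<and> c \<noteq> a \<and> c \<noteq> b \<and>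
              f = [:- c, 1:] * [:- a, 1:]^2 * [:- b, 1:]^2 \<and>
              (\<forall>x. l * x^2 - 2 * c21 * x + c20 = 0 \<longleftrightarrow> x = a \<or> x = b) \<and>
              (F4 > 0 \<and> F5 < 0 \<longrightarrow> c < a) \<and>
              (F4 < 0 \<longrightarrow> a < c \<and> c < b) \<and>
              (F4 > 0 \<and> F5 > 0 \<longrightarrow> b < c)"
proof -
  obtain a b c e :: complex where
    hF: "map_poly complex_of_real (quintic p q r s t) = [:-a,1:]^2*[:-b,1:]*[:-c,1:]*[:-e,1:]"
    using disc_zero[OF assms(1)] by blast
  have "Concl p q r s t" by (rule case2[OF hF assms(2) assms(3) assms(4)])
  thus ?thesis unfolding Concl_def .
qed

end
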